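(* Let $m,n\ge1$, $a\in(0,\infty)^m$, $b\in(0,\infty)^n$, and let $\Omega$ be a real $m\times n$ matrix. Let $(A,B)_0$ be an arbitrary point in the interior of $\tilde{\mathcal A}$, and define recursively $(A,B)_{k+1}=T_2(T_1((A,B)_k))$. Then $$\lim_{k\to\infty}F((A,B)_k)=\max_{(A,B)\in\tilde{\mathcal A}}F(A,B).$$
   Context: $\mathcal A$ is the set of pairs $(A,B)$ of $(m+1)\times(n+1)$ real matrices (indices $i=0,\dots,m$, $j=0,\dots,n$) with: $A_{ij},B_{ij}\ge0$; $a_i=\sum_{j=0}^nA_{ij}$ for $i=1,\dots,m$; $A_{0j}=0$ for all $j$; $b_j=\sum_{i=0}^mB_{ij}$ for $j=1,\dots,n$; $B_{i0}=0$ for all $i$. $F(A,B)=\sum_{i=1}^m\sum_{j=1}^n\sqrt{A_{ij}B_{ij}}\,\Omega_{ij}$. $\tilde{\mathcal A}\subset\mathcal A$ consists of those $(A,B)$ with: (1) $A_{ij}=B_{ij}=0$ whenever $i,j\ge1$ and $\Omega_{ij}\le0$; (2) for $j\ge1$, $B_{0j}=0$ if there is $i\ge1$ with $\Omega_{ij}>0$; (3) for $i\ge1$, $A_{i0}=0$ if there is $j\ge1$ with $\Omega_{ij}>0$. $T_1(A,B)=(E,B)$ where $E_{ij}=A_{ij}$ if $i=0$ or $j=0$, and otherwise $E_{ij}=a_iB_{ij}\Omega_{ij}^2/\sum_{k=1}^nB_{ik}\Omega_{ik}^2$ if this denominator is positive and $E_{ij}=0$ otherwise. $T_2(A,B)=(A,E)$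 where $E_{ij}=B_{ij}$ if $i=0$ or $j=0$, and otherwise $E_{ij}=b_jA_{ij}\Omega_{ij}^2/\sum_{k=1}^mA_{kj}\Omega_{kj}^2$ if this denominator is positive and $E_{ij}=0$ otherwise. "Interior" refers to the interior of the convex set $\tilde{\mathcal A}$ (relative to the affine space it spans). *)

theory Defs
  imports "HOL-Analysis.Analysis"
begin

text \<open>Index conventions: rows of A,B are indexed by 'm option, columns by 'n option;
  None plays the role of the index 0, Some i the indices 1..m (resp. 1..n).
  a :: real^'m, b :: real^'n, Omega :: real^'n^'m (an m x n matrix).\<close>

type_synonym ('m,'n) mat0 = "real ^ 'n option ^ 'm option"

definition Aset :: "real ^ 'm::finite \<Rightarrow> real ^ 'n::finite \<Rightarrow> (('m,'n) mat0 \<times> ('m,'n) mat0) set" where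
  "Aset a b = {(A, B).
     (\<forall>i j. A $ i $ j \<ge> 0 \<and> B $ i $ j \<ge> 0) \<and>
     (\<forall>i. a $ i = (\<Sum>j\<in>UNIV. A $ Some i $ j)) \<and>
     (\<forall>j. A $ None $ j = 0) \<and>
     (\<forall>j. b $ j = (\<Sum>i\<in>UNIV. B $ i $ Some j)) \<and>
     (\<forall>i. B $ i $ None = 0)}"

definition Fobj :: "real ^ 'n::finite ^ 'm::finite \<Rightarrow> ('m,'n) mat0 \<times> ('m,'n) mat0 \<Rightarrow> real" where
  "Fobj Omega p = (case p of (A, B) \<Rightarrow>
     (\<Sum>i\<in>UNIV. \<Sum>j\<in>UNIV. sqrt (A $ Some i $ Some j * B $ Some i $ Some j) * Omega $ i $ j))"

definition Atilde :: "real ^ 'm::finite \<Rightarrow> real ^ 'n::finite \<Rightarrow> real ^ 'n ^ 'm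
     \<Rightarrow> (('m,'n) mat0 \<times> ('m,'n) mat0) set" where
  "Atilde a b Omega = {(A, B) \<in> Aset a b.
     (\<forall>i j. Omega $ i $ j \<le> 0 \<longrightarrow> A $ Some i $ Some j = 0 \<and> B $ Some i $ Some j = 0) \<and>
     (\<forall>j. (\<exists>i. Omega $ i $ j > 0) \<longrightarrow> B $ None $ Some j = 0) \<and>
     (\<forall>i. (\<exists>j. Omega $ i $ j > 0) \<longrightarrow> A $ Some i $ None = 0)}"

definition T1 :: "real ^ 'm::finite \<Rightarrow> real ^ 'n::finite ^ 'm
     \<Rightarrow> ('m,'n) mat0 \<times> ('m,'n) mat0 \<Rightarrow> ('m,'n) mat0 \<times> ('m,'n) mat0" where
  "T1 a Omega p = (case p of (A, B) \<Rightarrow>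
     ((\<chi> i j. (case (i, j) of
         (Some i', Some j') \<Rightarrow>
            (let d = (\<Sum>k\<in>UNIV. B $ Some i' $ Some k * (Omega $ i' $ k)\<^sup>2) in
             if d > 0 then a $ i' * B $ Some i' $ Some j' * (Omega $ i' $ j')\<^sup>2 / d else 0)
       | _ \<Rightarrow> A $ i $ j)), B))"

definition T2 :: "real ^ 'n::finite \<Rightarrow> real ^ 'n ^ 'm::finite
     \<Rightarrow> ('m,'n) mat0 \<times> ('m,'n) mat0 \<Rightarrow> ('m,'n) mat0 \<times> ('m,'n) mat0" where
  "T2 b Omega p = (case p of (A, B) \<Rightarrow>
     (A, (\<chi> i j. (case (i, j) of
         (Some i', Some j') \<Rightarrow>
            (let d = (\<Sum>k\<in>UNIV. A $ Some k $ Some j' * (Omega $ k $ j')\<^sup>2) in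
             if d > 0 then b $ j' * A $ Some i' $ Some j' * (Omega $ i' $ j')\<^sup>2 / d else 0)
       | _ \<Rightarrow> B $ i $ j))))"

end

theory Submission
  imports Defs
begin

lemma sum_UNIV_option:
  "(\<Sum>x\<in>(UNIV::'a::finite option set). f x) = f None + (\<Sum>i\<in>UNIV. f (Some i))"
proof -
  have "(\<Sum>x\<in>(UNIV::'a option set). f x) = (\<Sum>x\<in>insert None (range Some). f x)"
    by (simp add: UNIV_option_conv[symmetric])
  also have "\<dots> = f None + (\<Sum>x\<in>range Some. f x)"
    by (subst sum.insert) auto
  also have "(\<Sum>x\<in>range Some. f x) = (\<Sum>i\<in>UNIV. f (Some i))"
    by (subst sum.reindex) (auto simp: inj_on_def)
  finally show ?thesis .
qed

lemma T1_simps: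
  fixes a :: "real ^ 'm::finite" and Omega :: "real ^ 'n::finite ^ 'm"
  shows "snd (T1 a Omega (A,B)) = B"
    "fst (T1 a Omega (A,B)) $ None $ j = A $ None $ j"
    "fst (T1 a Omega (A,B)) $ Some i $ None = A $ Some i $ None"
    "fst (T1 a Omega (A,B)) $ Some i $ Some j' =
       (if (\<Sum>k\<in>UNIV. B $ Some i $ Some k * (Omega $ i $ k)\<^sup>2) > 0
        then a $ i * B $ Some i $ Some j' * (Omega $ i $ j')\<^sup>2 / (\<Sum>k\<in>UNIV. B $ Some i $ Some k * (Omega $ i $ k)\<^sup>2) else 0)"
  by (simp_all add: T1_def Let_def)

lemma T2_simps:
  fixes b :: "real ^ 'n::finite" and Omega :: "real ^ 'n ^ 'm::finite"
  shows "fst (T2 b Omega (A,B)) = A"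
    "snd (T2 b Omega (A,B)) $ r $ None = B $ r $ None"
    "snd (T2 b Omega (A,B)) $ None $ Some j = B $ None $ Some j"
    "snd (T2 b Omega (A,B)) $ Some i $ Some j =
       (if (\<Sum>k\<in>UNIV. A $ Some k $ Some j * (Omega $ k $ j)\<^sup>2) > 0
        then b $ j * A $ Some i $ Some j * (Omega $ i $ j)\<^sup>2 / (\<Sum>k\<in>UNIV. A $ Some k $ Some j * (Omega $ k $ j)\<^sup>2) else 0)"
  by (simp_all add: T2_def Let_def split: option.split)

lemma T1_pair: "T1 a Omega (A,B) = (fst (T1 a Omega (A,B)), B)"
  by (simp add: T1_def)

lemma T2_pair: "T2 b Omega (A,B) = (A, snd (T2 b Omega (A,B)))"
  by (simp add: T2_def)

lemma Atilde_iff: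
  "(A,B) \<in> Atilde a b Omega \<longleftrightarrow>
     (\<forall>i j. A $ i $ j \<ge> 0 \<and> B $ i $ j \<ge> 0) \<and>
     (\<forall>i. a $ i = (\<Sum>j\<in>UNIV. A $ Some i $ j)) \<and>
     (\<forall>j. A $ None $ j = 0) \<and>
     (\<forall>j. b $ j = (\<Sum>i\<in>UNIV. B $ i $ Some j)) \<and>
     (\<forall>i. B $ i $ None = 0) \<and>
     (\<forall>i j. Omega $ i $ j \<le> 0 \<longrightarrow> A $ Some i $ Some j = 0 \<and> B $ Some i $ Some j = 0) \<and>
     (\<forall>j. (\<exists>i. Omega $ i $ j > 0) \<longrightarrow> B $ None $ Some j = 0) \<and>
     (\<forall>i. (\<exists>j. Omega $ i $ j > 0) \<longrightarrow> A $ Some i $ None = 0)"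
  by (simp add: Atilde_def Aset_def)

lemma T1_step:
  fixes a :: "real ^ 'm::finite" and b :: "real ^ 'n::finite" and Omega :: "real ^ 'n ^ 'm"
  assumes AB: "(A,B) \<in> Atilde a b Omega" and apos: "\<forall>i. a $ i > 0"
    and Bpos: "\<forall>i j. Omega $ i $ j > 0 \<longrightarrow> B $ Some i $ Some j > 0"
  shows "(fst (T1 a Omega (A,B)), B) \<in> Atilde a b Omega"
    "\<forall>i j. Omega $ i $ j > 0 \<longrightarrow> fst (T1 a Omega (A,B)) $ Some i $ Some j > 0"
proof -
  define A' where "A' = fst (T1 a Omega (A,B))"
  define d where "d i = (\<Sum>k\<in>UNIV. B $ Some i $ Some k * (Omega $ i $ k)\<^sup>2)" for i
  have C: "(\<forall>i j. A $ i $ j \<ge> 0 \<and> B $ i $ j \<ge> 0) \<and>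
     (\<forall>i. a $ i = (\<Sum>j\<in>UNIV. A $ Some i $ j)) \<and>
     (\<forall>j. A $ None $ j = 0) \<and>
     (\<forall>j. b $ j = (\<Sum>i\<in>UNIV. B $ i $ Some j)) \<and>
     (\<forall>i. B $ i $ None = 0) \<and>
     (\<forall>i j. Omega $ i $ j \<le> 0 \<longrightarrow> A $ Some i $ Some j = 0 \<and> B $ Some i $ Some j = 0) \<and>
     (\<forall>j. (\<exists>i. Omega $ i $ j > 0) \<longrightarrow> B $ None $ Some j = 0) \<and>
     (\<forall>i. (\<exists>j. Omega $ i $ j > 0) \<longrightarrow> A $ Some i $ None = 0)"
    using AB by (simp add: Atilde_iff)
  have A'1: "A' $ None $ j = A $ None $ j" for j by (simp add: A'_def T1_simps)
  have A'2: "A' $ Some i $ None = A $ Some i $ None" for i by (simp add: A'_def T1_simps)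
  have A'3: "A' $ Some i $ Some j = (if d i > 0 then a $ i * B $ Some i $ Some j * (Omega $ i $ j)\<^sup>2 / d i else 0)" for i j
    by (simp add: A'_def T1_simps d_def)
  have dnn: "d i \<ge> 0" for i unfolding d_def using C by (intro sum_nonneg) auto
  have dpos: "d i > 0" if "Omega $ i $ j > 0" for i j
    unfolding d_def
  proof (rule sum_pos2[of UNIV j])
    show "0 < B $ Some i $ Some j * (Omega $ i $ j)\<^sup>2" using Bpos that by simp
  qed (use C in auto)
  have dzero: "d i = 0" if "\<not> (\<exists>j. Omega $ i $ j > 0)" for i
    unfolding d_def using that C by (intro sum.neutral) (auto simp: not_less)
  have rowsum: "a $ i = (\<Sum>j\<in>UNIV. A' $ Some i $ j)" for i
  proof (cases "\<exists>j. Omega $ i $ j > 0")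
    case True
    then obtain j0 where j0: "Omega $ i $ j0 > 0" by auto
    have dp: "d i > 0" using dpos[OF j0] .
    have "(\<Sum>j\<in>UNIV. A' $ Some i $ j) = A' $ Some i $ None + (\<Sum>j\<in>UNIV. A' $ Some i $ Some j)"
      by (rule sum_UNIV_option)
    also have "A' $ Some i $ None = 0" using A'2 C True by simp
    also have "(\<Sum>j\<in>UNIV. A' $ Some i $ Some j) = (\<Sum>j\<in>UNIV. a $ i * (B $ Some i $ Some j * (Omega $ i $ j)\<^sup>2)) / d i"
      using dp by (simp add: A'3 mult.assoc sum_divide_distrib)
    also have "\<dots> = a $ i * d i / d i" by (simp add: sum_distrib_left[symmetric] d_def)
    also have "\<dots> = a $ i" using dp by simp
    finally show ?thesis by simp
  next
    case False
    have "(\<Sum>j\<in>UNIV. A' $ Some i $ j) = A' $ Some i $ None + (\<Sum>j\<in>UNIV. A' $ Some i $ Some j)"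
      by (rule sum_UNIV_option)
    also have "(\<Sum>j\<in>UNIV. A' $ Some i $ Some j) = 0"
      using dzero[OF False] by (simp add: A'3)
    also have "a $ i = A $ Some i $ None + (\<Sum>j\<in>UNIV. A $ Some i $ Some j)"
      using C sum_UNIV_option[of "\<lambda>j. A $ Some i $ j"] by simp
    moreover have "(\<Sum>j\<in>UNIV. A $ Some i $ Some j) = 0"
      using False C by (intro sum.neutral) (auto simp: not_less)
    ultimately show ?thesis using A'2 by simp
  qed
  have nn: "A' $ i $ j \<ge> 0" for i j
  proof (cases i)
    case None then show ?thesis using A'1 C by simp
  next
    case (Some i')
    show ?thesis
    proof (cases j)
      case None then show ?thesis using Some A'2 C by simp
    next
      case (Some j')
      have "a $ i' > 0" using apos by simp
      then show ?thesis using Some \<open>i = Some i'\<close> A'3[of i' j'] C dnn[of i']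
        by (simp add: less_imp_le)
    qed
  qed
  have z: "A' $ Some i $ Some j = 0" if "Omega $ i $ j \<le> 0" for i j
    using that C by (simp add: A'3)
  show "(fst (T1 a Omega (A,B)), B) \<in> Atilde a b Omega"
    unfolding A'_def[symmetric] Atilde_iff
    using C nn rowsum z A'1 A'2 by simp
  show "\<forall>i j. Omega $ i $ j > 0 \<longrightarrow> fst (T1 a Omega (A,B)) $ Some i $ Some j > 0"
    unfolding A'_def[symmetric]
  proof (intro allI impI)
    fix i j assume h: "Omega $ i $ j > 0"
    show "A' $ Some i $ Some j > 0" using dpos[OF h] Bpos h apos by (simp add: A'3)
  qed
qed

lemma T2_step:
  fixes a :: "real ^ 'm::finite" and b :: "real ^ 'n::finite" and Omega :: "real ^ 'n ^ 'm"
  assumes AB: "(A,B) \<in> Atilde a b Omega" and bpos: "\<forall>j. b $ j > 0"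
    and Apos: "\<forall>i j. Omega $ i $ j > 0 \<longrightarrow> A $ Some i $ Some j > 0"
  shows "(A, snd (T2 b Omega (A,B))) \<in> Atilde a b Omega"
    "\<forall>i j. Omega $ i $ j > 0 \<longrightarrow> snd (T2 b Omega (A,B)) $ Some i $ Some j > 0"
proof -
  define B' where "B' = snd (T2 b Omega (A,B))"
  define d where "d j = (\<Sum>k\<in>UNIV. A $ Some k $ Some j * (Omega $ k $ j)\<^sup>2)" for j
  have C: "(\<forall>i j. A $ i $ j \<ge> 0 \<and> B $ i $ j \<ge> 0) \<and>
     (\<forall>i. a $ i = (\<Sum>j\<in>UNIV. A $ Some i $ j)) \<and>
     (\<forall>j. A $ None $ j = 0) \<and>
     (\<forall>j. b $ j = (\<Sum>i\<in>UNIV. B $ i $ Some j)) \<and>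
     (\<forall>i. B $ i $ None = 0) \<and>
     (\<forall>i j. Omega $ i $ j \<le> 0 \<longrightarrow> A $ Some i $ Some j = 0 \<and> B $ Some i $ Some j = 0) \<and>
     (\<forall>j. (\<exists>i. Omega $ i $ j > 0) \<longrightarrow> B $ None $ Some j = 0) \<and>
     (\<forall>i. (\<exists>j. Omega $ i $ j > 0) \<longrightarrow> A $ Some i $ None = 0)"
    using AB by (simp add: Atilde_iff)
  have B'1: "B' $ r $ None = B $ r $ None" for r by (simp add: B'_def T2_simps)
  have B'2: "B' $ None $ Some j = B $ None $ Some j" for j by (simp add: B'_def T2_simps)
  have B'3: "B' $ Some i $ Some j = (if d j > 0 then b $ j * A $ Some i $ Some j * (Omega $ i $ j)\<^sup>2 / d j else 0)" for i j
    by (simp add: B'_def T2_simps d_def)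
  have dnn: "d j \<ge> 0" for j unfolding d_def using C by (intro sum_nonneg) auto
  have dpos: "d j > 0" if "Omega $ i $ j > 0" for i j
    unfolding d_def
  proof (rule sum_pos2[of UNIV i])
    show "0 < A $ Some i $ Some j * (Omega $ i $ j)\<^sup>2" using Apos that by simp
  qed (use C in auto)
  have dzero: "d j = 0" if "\<not> (\<exists>i. Omega $ i $ j > 0)" for j
    unfolding d_def using that C by (intro sum.neutral) (auto simp: not_less)
  have colsum: "b $ j = (\<Sum>i\<in>UNIV. B' $ i $ Some j)" for j
  proof (cases "\<exists>i. Omega $ i $ j > 0")
    case True
    then obtain i0 where i0: "Omega $ i0 $ j > 0" by auto
    have dp: "d j > 0" using dpos[OF i0] .
    have "(\<Sum>i\<in>UNIV. B' $ i $ Some j) = B' $ None $ Some j + (\<Sum>i\<in>UNIV. B' $ Some i $ Some j)"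
      by (rule sum_UNIV_option)
    also have "B' $ None $ Some j = 0" using B'2 C True by simp
    also have "(\<Sum>i\<in>UNIV. B' $ Some i $ Some j) = (\<Sum>i\<in>UNIV. b $ j * (A $ Some i $ Some j * (Omega $ i $ j)\<^sup>2)) / d j"
      using dp by (simp add: B'3 mult.assoc sum_divide_distrib)
    also have "\<dots> = b $ j * d j / d j" by (simp add: sum_distrib_left[symmetric] d_def)
    also have "\<dots> = b $ j" using dp by simp
    finally show ?thesis by simp
  next
    case False
    have "(\<Sum>i\<in>UNIV. B' $ i $ Some j) = B' $ None $ Some j + (\<Sum>i\<in>UNIV. B' $ Some i $ Some j)"
      by (rule sum_UNIV_option)
    also have "(\<Sum>i\<in>UNIV. B' $ Some i $ Some j) = 0"
      using dzero[OF False] by (simp add: B'3)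
    also have "b $ j = B $ None $ Some j + (\<Sum>i\<in>UNIV. B $ Some i $ Some j)"
      using C sum_UNIV_option[of "\<lambda>i. B $ i $ Some j"] by simp
    moreover have "(\<Sum>i\<in>UNIV. B $ Some i $ Some j) = 0"
      using False C by (intro sum.neutral) (auto simp: not_less)
    ultimately show ?thesis using B'2 by simp
  qed
  have nn: "B' $ i $ j \<ge> 0" for i j
  proof (cases j)
    case None then show ?thesis using B'1 C by simp
  next
    case (Some j')
    show ?thesis
    proof (cases i)
      case None then show ?thesis using Some B'2 C by simp
    next
      case (Some i')
      have "b $ j' > 0" using bpos by simp
      then show ?thesis using Some \<open>j = Some j'\<close> B'3[of i' j'] C dnn[of j']
        by (simp add: less_imp_le)
    qed
  qed
  have z: "B' $ Some i $ Some j = 0" if "Omega $ i $ j \<le> 0" for i j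
    using that C by (simp add: B'3)
  show "(A, snd (T2 b Omega (A,B))) \<in> Atilde a b Omega"
    unfolding B'_def[symmetric] Atilde_iff
    using C nn colsum z B'1 B'2 by simp
  show "\<forall>i j. Omega $ i $ j > 0 \<longrightarrow> snd (T2 b Omega (A,B)) $ Some i $ Some j > 0"
    unfolding B'_def[symmetric]
  proof (intro allI impI)
    fix i j assume h: "Omega $ i $ j > 0"
    show "B' $ Some i $ Some j > 0" using dpos[OF h] Apos h bpos by (simp add: B'3)
  qed
qed

lemma entry_ineq:
  fixes Ao Bo om r s a b B B'' :: real
  assumes Ao: "Ao \<ge> 0" and Bo: "Bo \<ge> 0" and a: "a > 0" and b: "b > 0"
    and r: "r \<ge> 0" and s: "s \<ge> 0"
    and neg: "om \<le> 0 \<Longrightarrow> Ao = 0 \<and> Bo = 0"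
    and pos: "om > 0 \<Longrightarrow> r > 0 \<and> s > 0 \<and> B > 0 \<and> B'' = b * (a * B * om\<^sup>2 / r) * om\<^sup>2 / s"
  shows "sqrt (Ao * Bo) * om * (ln B - ln B'') \<le> 2 * (Ao * sqrt (r / a)) + 2 * (Bo * sqrt (s / b)) - 4 * (sqrt (Ao * Bo) * om)"
proof (cases "om > 0 \<and> Ao > 0 \<and> Bo > 0")
  case False
  then have "Ao * Bo = 0 \<or> om \<le> 0" using Ao Bo by auto
  then have z: "sqrt (Ao * Bo) * om = 0" using neg by auto
  have "0 \<le> 2 * (Ao * sqrt (r / a)) + 2 * (Bo * sqrt (s / b))"
    using Ao Bo a b r s by simp
  then show ?thesis unfolding z by simp
next
  case True
  then have om: "om > 0" and Ap: "Ao > 0" and Bp: "Bo > 0" by auto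
  from pos[OF om] have rp: "r > 0" and sp: "s > 0" and Bq: "B > 0" and B'': "B'' = b * (a * B * om\<^sup>2 / r) * om\<^sup>2 / s" by auto
  define u where "u = sqrt Ao"
  define v where "v = sqrt Bo"
  have up: "u > 0" and vp: "v > 0" using Ap Bp by (auto simp: u_def v_def)
  have Au: "Ao = u\<^sup>2" and Bv: "Bo = v\<^sup>2" using Ap Bp by (auto simp: u_def v_def)
  define t1 where "t1 = sqrt (r / a) * u / (om * v)"
  define t2 where "t2 = sqrt (s / b) * v / (om * u)"
  have t1p: "t1 > 0" and t2p: "t2 > 0" using rp sp a b up vp om by (auto simp: t1_def t2_def)
  have sq1: "(sqrt (r / a))\<^sup>2 = r / a" using rp a by simp
  have sq2: "(sqrt (s / b))\<^sup>2 = s / b" using sp b by simp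
  have tt: "(t1 * t2)\<^sup>2 = (r / a) * (s / b) / om^4"
    unfolding t1_def t2_def power_mult_distrib power_divide sq1 sq2 using up vp om
    by (simp add: field_simps)
  have eqB: "B / B'' = (t1 * t2)\<^sup>2"
    unfolding B'' tt using rp sp a b om Bq
    by (simp add: field_simps)
  have B''p: "B'' > 0" unfolding B'' using Bq rp sp a b om by simp
  have "ln (B / B'') = ln B - ln B''" using Bq B''p by (simp add: ln_div)
  then have "ln B - ln B'' = ln ((t1 * t2)\<^sup>2)"
    unfolding eqB by simp
  also have "\<dots> = 2 * ln t1 + 2 * ln t2"
    using t1p t2p by (simp add: ln_realpow ln_mult)
  finally have L: "ln B - ln B'' = 2 * ln t1 + 2 * ln t2" .
  have l1: "ln t1 \<le> t1 - 1" and l2: "ln t2 \<le> t2 - 1" using t1p t2p by (auto intro: ln_le_minus_one)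
  have P: "sqrt (Ao * Bo) * om = u * v * om" using up vp by (simp add: u_def v_def real_sqrt_mult)
  have e1: "u * v * om * t1 = Ao * sqrt (r / a)" using up vp om by (simp add: t1_def Au power2_eq_square)
  have e2: "u * v * om * t2 = Bo * sqrt (s / b)" using up vp om by (simp add: t2_def Bv power2_eq_square)
  have Pp: "u * v * om > 0" using up vp om by simp
  have "u * v * om * (2 * ln t1 + 2 * ln t2) \<le> u * v * om * (2 * (t1 - 1) + 2 * (t2 - 1))"
    using l1 l2 Pp by (intro mult_left_mono) auto
  also have "\<dots> = 2 * (u * v * om * t1) + 2 * (u * v * om * t2) - 4 * (u * v * om)"
    by (simp add: algebra_simps)
  finally show ?thesis unfolding P L e1 e2 .
qed
lemma term_ident1:
  fixes a r B om :: real
  assumes "B \<ge> 0" "a > 0" "r > 0" "om < 0 \<Longrightarrow> B = 0"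
  shows "sqrt (a * B * om\<^sup>2 / r * B) * om = B * om\<^sup>2 * sqrt (a / r)"
proof -
  have "a * B * om\<^sup>2 / r * B = (B * \<bar>om\<bar>)\<^sup>2 * (a / r)"
    by (simp add: power2_eq_square field_simps)
  then have "sqrt (a * B * om\<^sup>2 / r * B) = sqrt ((B * \<bar>om\<bar>)\<^sup>2) * sqrt (a / r)"
    by (simp only: real_sqrt_mult)
  also have "sqrt ((B * \<bar>om\<bar>)\<^sup>2) = B * \<bar>om\<bar>"
    using assms by (simp only: real_sqrt_abs) simp
  finally have "sqrt (a * B * om\<^sup>2 / r * B) = B * \<bar>om\<bar> * sqrt (a / r)" .
  then show ?thesis using assms
    by (cases "om < 0") (auto simp: power2_eq_square abs_if)
qed

lemma term_ident2:
  fixes b s X om :: real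
  assumes "X \<ge> 0" "b > 0" "s > 0" "om < 0 \<Longrightarrow> X = 0"
  shows "sqrt (X * (b * X * om\<^sup>2 / s)) * om = X * om\<^sup>2 * sqrt (b / s)"
  using term_ident1[OF assms] by (simp add: mult.commute)

lemma row_ident:
  fixes a :: "real ^ 'm::finite" and b :: "real ^ 'n::finite" and Omega :: "real ^ 'n ^ 'm"
  assumes AB: "(A,B) \<in> Atilde a b Omega" and AoBo: "(Ao,Bo) \<in> Atilde a b Omega"
    and apos: "\<forall>i. a $ i > 0"
  shows "(\<Sum>j\<in>UNIV. Ao $ Some i $ Some j * sqrt ((\<Sum>k\<in>UNIV. B $ Some i $ Some k * (Omega $ i $ k)\<^sup>2) / a $ i))
       = (\<Sum>j\<in>UNIV. sqrt (fst (T1 a Omega (A,B)) $ Some i $ Some j * B $ Some i $ Some j) * Omega $ i $ j)"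
proof -
  define r where "r = (\<Sum>k\<in>UNIV. B $ Some i $ Some k * (Omega $ i $ k)\<^sup>2)"
  have C: "(\<forall>i j. B $ i $ j \<ge> 0) \<and>
     (\<forall>i j. Omega $ i $ j \<le> 0 \<longrightarrow> B $ Some i $ Some j = 0)"
    using AB by (simp add: Atilde_iff)
  have Co: "(\<forall>i. a $ i = (\<Sum>j\<in>UNIV. Ao $ Some i $ j)) \<and>
     (\<forall>i. (\<exists>j. Omega $ i $ j > 0) \<longrightarrow> Ao $ Some i $ None = 0)"
    using AoBo by (simp add: Atilde_iff)
  have ai: "a $ i > 0" using apos by simp
  have rnn: "r \<ge> 0" unfolding r_def using C by (intro sum_nonneg) auto
  show ?thesis
  proof (cases "r > 0")
    case False
    then have r0: "r = 0" using rnn by simp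
    show ?thesis using r0 by (simp add: T1_simps r_def[symmetric])
  next
    case True
    have "\<exists>j. B $ Some i $ Some j * (Omega $ i $ j)\<^sup>2 \<noteq> 0"
    proof (rule ccontr)
      assume "\<not> ?thesis"
      then have "r = 0" unfolding r_def by (intro sum.neutral) auto
      then show False using True by simp
    qed
    then obtain j0 where "B $ Some i $ Some j0 * (Omega $ i $ j0)\<^sup>2 \<noteq> 0" by auto
    then have "Omega $ i $ j0 > 0" using C by (metis mult_eq_0_iff not_less)
    then have "Ao $ Some i $ None = 0" using Co by auto
    then have sA: "(\<Sum>j\<in>UNIV. Ao $ Some i $ Some j) = a $ i"
      using Co sum_UNIV_option[of "\<lambda>j. Ao $ Some i $ j"] by simp
    have "(\<Sum>j\<in>UNIV. Ao $ Some i $ Some j * sqrt (r / a $ i)) = a $ i * sqrt (r / a $ i)"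
      by (simp add: sum_distrib_right[symmetric] sA)
    also have "\<dots> = r * sqrt (a $ i / r)"
    proof -
      have "a $ i * sqrt (r / a $ i) = sqrt (a $ i * r)"
        using ai True by (simp add: real_sqrt_divide real_sqrt_mult field_simps)
      moreover have "r * sqrt (a $ i / r) = sqrt (a $ i * r)"
        using ai True by (simp add: real_sqrt_divide real_sqrt_mult field_simps)
      ultimately show ?thesis by simp
    qed
    also have "\<dots> = (\<Sum>j\<in>UNIV. B $ Some i $ Some j * (Omega $ i $ j)\<^sup>2 * sqrt (a $ i / r))"
      by (simp add: r_def sum_distrib_right)
    also have "\<dots> = (\<Sum>j\<in>UNIV. sqrt (fst (T1 a Omega (A,B)) $ Some i $ Some j * B $ Some i $ Some j) * Omega $ i $ j)"
    proof (rule sum.cong[OF refl])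
      fix j
      show "B $ Some i $ Some j * (Omega $ i $ j)\<^sup>2 * sqrt (a $ i / r) =
            sqrt (fst (T1 a Omega (A,B)) $ Some i $ Some j * B $ Some i $ Some j) * Omega $ i $ j"
        using term_ident1[of "B $ Some i $ Some j" "a $ i" r "Omega $ i $ j"] C ai True
        by (simp add: T1_simps r_def[symmetric])
    qed
    finally show ?thesis by (simp add: r_def)
  qed
qed

lemma col_ident:
  fixes a :: "real ^ 'm::finite" and b :: "real ^ 'n::finite" and Omega :: "real ^ 'n ^ 'm"
  assumes AB: "(A,B) \<in> Atilde a b Omega" and AoBo: "(Ao,Bo) \<in> Atilde a b Omega"
    and bpos: "\<forall>j. b $ j > 0"
  shows "(\<Sum>i\<in>UNIV. Bo $ Some i $ Some j * sqrt ((\<Sum>k\<in>UNIV. A $ Some k $ Some j * (Omega $ k $ j)\<^sup>2) / b $ j))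
       = (\<Sum>i\<in>UNIV. sqrt (A $ Some i $ Some j * snd (T2 b Omega (A,B)) $ Some i $ Some j) * Omega $ i $ j)"
proof -
  define s where "s = (\<Sum>k\<in>UNIV. A $ Some k $ Some j * (Omega $ k $ j)\<^sup>2)"
  have C: "(\<forall>i j. A $ i $ j \<ge> 0) \<and>
     (\<forall>i j. Omega $ i $ j \<le> 0 \<longrightarrow> A $ Some i $ Some j = 0)"
    using AB by (simp add: Atilde_iff)
  have Co: "(\<forall>j. b $ j = (\<Sum>i\<in>UNIV. Bo $ i $ Some j)) \<and>
     (\<forall>j. (\<exists>i. Omega $ i $ j > 0) \<longrightarrow> Bo $ None $ Some j = 0)"
    using AoBo by (simp add: Atilde_iff)
  have bj: "b $ j > 0" using bpos by simp
  have snn: "s \<ge> 0" unfolding s_def using C by (intro sum_nonneg) auto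
  show ?thesis
  proof (cases "s > 0")
    case False
    then have s0: "s = 0" using snn by simp
    show ?thesis using s0 by (simp add: T2_simps s_def[symmetric])
  next
    case True
    have "\<exists>i. A $ Some i $ Some j * (Omega $ i $ j)\<^sup>2 \<noteq> 0"
    proof (rule ccontr)
      assume "\<not> ?thesis"
      then have "s = 0" unfolding s_def by (intro sum.neutral) auto
      then show False using True by simp
    qed
    then obtain i0 where "A $ Some i0 $ Some j * (Omega $ i0 $ j)\<^sup>2 \<noteq> 0" by auto
    then have "Omega $ i0 $ j > 0" using C by (metis mult_eq_0_iff not_less)
    then have "Bo $ None $ Some j = 0" using Co by auto
    then have sB: "(\<Sum>i\<in>UNIV. Bo $ Some i $ Some j) = b $ j"
      using Co sum_UNIV_option[of "\<lambda>i. Bo $ i $ Some j"] by simp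
    have "(\<Sum>i\<in>UNIV. Bo $ Some i $ Some j * sqrt (s / b $ j)) = b $ j * sqrt (s / b $ j)"
      by (simp add: sum_distrib_right[symmetric] sB)
    also have "\<dots> = s * sqrt (b $ j / s)"
    proof -
      have "b $ j * sqrt (s / b $ j) = sqrt (b $ j * s)"
        using bj True by (simp add: real_sqrt_divide real_sqrt_mult field_simps)
      moreover have "s * sqrt (b $ j / s) = sqrt (b $ j * s)"
        using bj True by (simp add: real_sqrt_divide real_sqrt_mult field_simps)
      ultimately show ?thesis by simp
    qed
    also have "\<dots> = (\<Sum>i\<in>UNIV. A $ Some i $ Some j * (Omega $ i $ j)\<^sup>2 * sqrt (b $ j / s))"
      by (simp add: s_def sum_distrib_right)
    also have "\<dots> = (\<Sum>i\<in>UNIV. sqrt (A $ Some i $ Some j * snd (T2 b Omega (A,B)) $ Some i $ Some j) * Omega $ i $ j)"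
    proof (rule sum.cong[OF refl])
      fix i
      show "A $ Some i $ Some j * (Omega $ i $ j)\<^sup>2 * sqrt (b $ j / s) =
            sqrt (A $ Some i $ Some j * snd (T2 b Omega (A,B)) $ Some i $ Some j) * Omega $ i $ j"
        using term_ident2[of "A $ Some i $ Some j" "b $ j" s "Omega $ i $ j"] C bj True
        by (simp add: T2_simps s_def[symmetric])
    qed
    finally show ?thesis by (simp add: s_def)
  qed
qed

lemma Fobj_eq: "Fobj Omega (A,B) = (\<Sum>i\<in>UNIV. \<Sum>j\<in>UNIV. sqrt (A $ Some i $ Some j * B $ Some i $ Some j) * Omega $ i $ j)"
  by (simp add: Fobj_def)

lemma potential_step:
  fixes a :: "real ^ 'm::finite" and b :: "real ^ 'n::finite" and Omega :: "real ^ 'n ^ 'm"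
  assumes AB: "(A,B) \<in> Atilde a b Omega"
    and Bpos: "\<forall>i j. Omega $ i $ j > 0 \<longrightarrow> B $ Some i $ Some j > 0"
    and AoBo: "(Ao,Bo) \<in> Atilde a b Omega"
    and apos: "\<forall>i. a $ i > 0" and bpos: "\<forall>j. b $ j > 0"
  shows "(\<Sum>i\<in>UNIV. \<Sum>j\<in>UNIV. sqrt (Ao $ Some i $ Some j * Bo $ Some i $ Some j) * Omega $ i $ j *
            (ln (B $ Some i $ Some j) - ln (snd (T2 b Omega (fst (T1 a Omega (A,B)), B)) $ Some i $ Some j)))
         \<le> 2 * Fobj Omega (fst (T1 a Omega (A,B)), B)
           + 2 * Fobj Omega (fst (T1 a Omega (A,B)), snd (T2 b Omega (fst (T1 a Omega (A,B)), B)))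
           - 4 * Fobj Omega (Ao,Bo)"
proof -
  define A' where "A' = fst (T1 a Omega (A,B))"
  define B'' where "B'' = snd (T2 b Omega (A',B))"
  have A'B: "(A',B) \<in> Atilde a b Omega" using T1_step(1)[OF AB apos Bpos] by (simp add: A'_def)
  have A'pos: "\<forall>i j. Omega $ i $ j > 0 \<longrightarrow> A' $ Some i $ Some j > 0"
    using T1_step(2)[OF AB apos Bpos] by (simp add: A'_def)
  define r where "r i = (\<Sum>k\<in>UNIV. B $ Some i $ Some k * (Omega $ i $ k)\<^sup>2)" for i
  define s where "s j = (\<Sum>k\<in>UNIV. A' $ Some k $ Some j * (Omega $ k $ j)\<^sup>2)" for j
  define P where "P i j = sqrt (Ao $ Some i $ Some j * Bo $ Some i $ Some j) * Omega $ i $ j" for i j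
  have C: "(\<forall>i j. B $ i $ j \<ge> 0) \<and>
     (\<forall>i j. Omega $ i $ j \<le> 0 \<longrightarrow> B $ Some i $ Some j = 0)"
    using AB by (simp add: Atilde_iff)
  have C': "(\<forall>i j. A' $ i $ j \<ge> 0) \<and>
     (\<forall>i j. Omega $ i $ j \<le> 0 \<longrightarrow> A' $ Some i $ Some j = 0)"
    using A'B by (simp add: Atilde_iff)
  have Co: "(\<forall>i j. Ao $ i $ j \<ge> 0 \<and> Bo $ i $ j \<ge> 0) \<and>
     (\<forall>i j. Omega $ i $ j \<le> 0 \<longrightarrow> Ao $ Some i $ Some j = 0 \<and> Bo $ Some i $ Some j = 0)"
    using AoBo by (simp add: Atilde_iff)
  have rnn: "r i \<ge> 0" for i unfolding r_def using C by (intro sum_nonneg) auto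
  have snn: "s j \<ge> 0" for j unfolding s_def using C' by (intro sum_nonneg) auto
  have rpos: "r i > 0" if "Omega $ i $ j > 0" for i j
    unfolding r_def
  proof (rule sum_pos2[of UNIV j])
    show "0 < B $ Some i $ Some j * (Omega $ i $ j)\<^sup>2" using Bpos that by simp
  qed (use C in auto)
  have spos: "s j > 0" if "Omega $ i $ j > 0" for i j
    unfolding s_def
  proof (rule sum_pos2[of UNIV i])
    show "0 < A' $ Some i $ Some j * (Omega $ i $ j)\<^sup>2" using A'pos that by simp
  qed (use C' in auto)
  have entry: "P i j * (ln (B $ Some i $ Some j) - ln (B'' $ Some i $ Some j))
      \<le> 2 * (Ao $ Some i $ Some j * sqrt (r i / a $ i)) + 2 * (Bo $ Some i $ Some j * sqrt (s j / b $ j)) - 4 * P i j" for i j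
    unfolding P_def
  proof (rule entry_ineq)
    show "0 \<le> Ao $ Some i $ Some j" "0 \<le> Bo $ Some i $ Some j" using Co by auto
    show "0 < a $ i" "0 < b $ j" using apos bpos by auto
    show "0 \<le> r i" "0 \<le> s j" using rnn snn by auto
    show "Omega $ i $ j \<le> 0 \<Longrightarrow> Ao $ Some i $ Some j = 0 \<and> Bo $ Some i $ Some j = 0" using Co by auto
    assume om: "Omega $ i $ j > 0"
    have rp: "r i > 0" using rpos[OF om] .
    have sp: "s j > 0" using spos[OF om] .
    have "B'' $ Some i $ Some j = b $ j * A' $ Some i $ Some j * (Omega $ i $ j)\<^sup>2 / s j"
      using sp by (simp add: B''_def T2_simps s_def)
    also have "A' $ Some i $ Some j = a $ i * B $ Some i $ Some j * (Omega $ i $ j)\<^sup>2 / r i"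
      using rp by (simp add: A'_def T1_simps r_def)
    finally show "0 < r i \<and> 0 < s j \<and> 0 < B $ Some i $ Some j \<and>
      B'' $ Some i $ Some j = b $ j * (a $ i * B $ Some i $ Some j * (Omega $ i $ j)\<^sup>2 / r i) * (Omega $ i $ j)\<^sup>2 / s j"
      using rp sp Bpos om by simp
  qed
  have "(\<Sum>i\<in>UNIV. \<Sum>j\<in>UNIV. P i j * (ln (B $ Some i $ Some j) - ln (B'' $ Some i $ Some j)))
     \<le> (\<Sum>i\<in>UNIV. \<Sum>j\<in>UNIV. 2 * (Ao $ Some i $ Some j * sqrt (r i / a $ i)) + 2 * (Bo $ Some i $ Some j * sqrt (s j / b $ j)) - 4 * P i j)"
    by (intro sum_mono entry)
  also have "\<dots> = 2 * (\<Sum>i\<in>UNIV. \<Sum>j\<in>UNIV. Ao $ Some i $ Some j * sqrt (r i / a $ i))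
      + 2 * (\<Sum>i\<in>UNIV. \<Sum>j\<in>UNIV. Bo $ Some i $ Some j * sqrt (s j / b $ j))
      - 4 * (\<Sum>i\<in>UNIV. \<Sum>j\<in>UNIV. P i j)"
    by (simp add: sum.distrib sum_subtractf sum_distrib_left)
  also have "(\<Sum>i\<in>UNIV. \<Sum>j\<in>UNIV. Ao $ Some i $ Some j * sqrt (r i / a $ i)) = Fobj Omega (A', B)"
    unfolding Fobj_eq r_def A'_def using row_ident[OF AB AoBo apos] by simp
  also have "(\<Sum>i\<in>UNIV. \<Sum>j\<in>UNIV. Bo $ Some i $ Some j * sqrt (s j / b $ j))
      = (\<Sum>j\<in>UNIV. \<Sum>i\<in>UNIV. Bo $ Some i $ Some j * sqrt (s j / b $ j))"
    by (rule sum.swap)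
  also have "\<dots> = (\<Sum>j\<in>UNIV. \<Sum>i\<in>UNIV. sqrt (A' $ Some i $ Some j * B'' $ Some i $ Some j) * Omega $ i $ j)"
    unfolding s_def B''_def using col_ident[OF A'B AoBo bpos] by simp
  also have "\<dots> = Fobj Omega (A', B'')"
    unfolding Fobj_eq by (rule sum.swap)
  also have "(\<Sum>i\<in>UNIV. \<Sum>j\<in>UNIV. P i j) = Fobj Omega (Ao, Bo)"
    unfolding Fobj_eq P_def by simp
  finally show ?thesis unfolding A'_def B''_def P_def by simp
qed

lemma witness:
  fixes a :: "real ^ 'm::finite" and b :: "real ^ 'n::finite" and Omega :: "real ^ 'n ^ 'm"
  assumes om: "Omega $ i0 $ j0 > 0" and apos: "\<forall>i. a $ i > 0" and bpos: "\<forall>j. b $ j > 0"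
  shows "\<exists>p1\<in>Atilde a b Omega. snd p1 $ Some i0 $ Some j0 = b $ j0"
proof -
  define cr where "cr i = (SOME j. Omega $ i $ j > 0)" for i
  define cc where "cc j = (if j = j0 then i0 else SOME i. Omega $ i $ j > 0)" for j
  have cr: "Omega $ i $ cr i > 0" if "\<exists>j. Omega $ i $ j > 0" for i
    using that unfolding cr_def by (rule someI_ex)
  have cc: "Omega $ cc j $ j > 0" if "\<exists>i. Omega $ i $ j > 0" for j
    using that om unfolding cc_def by (auto intro: someI_ex)
  define A1 :: "('m,'n) mat0" where "A1 = (\<chi> r c. (case r of None \<Rightarrow> 0 | Some i \<Rightarrow>
      if (\<exists>j. Omega $ i $ j > 0) then (if c = Some (cr i) then a $ i else 0)
      else (if c = None then a $ i else 0)))"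
  define B1 :: "('m,'n) mat0" where "B1 = (\<chi> r c. (case c of None \<Rightarrow> 0 | Some j \<Rightarrow>
      if (\<exists>i. Omega $ i $ j > 0) then (if r = Some (cc j) then b $ j else 0)
      else (if r = None then b $ j else 0)))"
  have nnA: "A1 $ r $ c \<ge> 0" for r c
    using apos bpos by (auto simp: A1_def less_imp_le split: option.split)
  have nnB: "B1 $ r $ c \<ge> 0" for r c
    using apos bpos by (auto simp: B1_def less_imp_le split: option.split)
  have rows: "a $ i = (\<Sum>c\<in>UNIV. A1 $ Some i $ c)" for i
    by (cases "\<exists>j. Omega $ i $ j > 0") (simp_all add: A1_def)
  have cols: "b $ j = (\<Sum>r\<in>UNIV. B1 $ r $ Some j)" for j
    by (cases "\<exists>i. Omega $ i $ j > 0") (simp_all add: B1_def)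
  have z1: "A1 $ Some i $ Some j = 0 \<and> B1 $ Some i $ Some j = 0" if h: "Omega $ i $ j \<le> 0" for i j
  proof
    show "A1 $ Some i $ Some j = 0"
    proof (cases "\<exists>j'. Omega $ i $ j' > 0")
      case True
      then have "j \<noteq> cr i" using cr[OF True] h by auto
      then show ?thesis by (simp add: A1_def)
    next
      case False
      then show ?thesis by (simp add: A1_def)
    qed
    show "B1 $ Some i $ Some j = 0"
    proof (cases "\<exists>i'. Omega $ i' $ j > 0")
      case True
      then have "i \<noteq> cc j" using cc[OF True] h by auto
      then show ?thesis by (simp add: B1_def)
    next
      case False
      then show ?thesis by (simp add: B1_def)
    qed
  qed
  have "(A1, B1) \<in> Atilde a b Omega"
    unfolding Atilde_iff using nnA nnB rows cols z1
    by (simp add: A1_def B1_def)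
  moreover have "B1 $ Some i0 $ Some j0 = b $ j0"
    using om by (auto simp: B1_def cc_def)
  ultimately show ?thesis by force
qed

lemma relint_pos:
  fixes a :: "real ^ 'm::finite" and b :: "real ^ 'n::finite" and Omega :: "real ^ 'n ^ 'm"
  assumes p0: "p0 \<in> rel_interior (Atilde a b Omega)" and apos: "\<forall>i. a $ i > 0" and bpos: "\<forall>j. b $ j > 0"
    and om: "Omega $ i $ j > 0"
  shows "snd p0 $ Some i $ Some j > 0"
proof -
  let ?S = "Atilde a b Omega"
  obtain e where e: "e > 0" and sub: "ball p0 e \<inter> affine hull ?S \<subseteq> ?S" and p0S: "p0 \<in> ?S"
    using p0 unfolding mem_rel_interior_ball by blast
  obtain p1 where p1: "p1 \<in> ?S" and p1b: "snd p1 $ Some i $ Some j = b $ j"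
    using witness[OF om apos bpos] by blast
  define t where "t = e / (2 * (norm (p0 - p1) + 1))"
  have "norm (p0 - p1) + 1 > 0" by (simp add: add_nonneg_pos)
  then have tp: "t > 0" using e unfolding t_def by (intro divide_pos_pos) auto
  define q where "q = (1 + t) *\<^sub>R p0 + (- t) *\<^sub>R p1"
  have "q \<in> affine hull ?S"
    unfolding q_def by (rule mem_affine[OF affine_affine_hull hull_inc[OF p0S] hull_inc[OF p1]]) simp
  moreover have "dist p0 q < e"
  proof -
    have "p0 - q = t *\<^sub>R (p1 - p0)" by (simp add: q_def algebra_simps)
    then have "dist p0 q = t * norm (p0 - p1)" using tp by (simp add: dist_norm norm_minus_commute)
    also have "\<dots> = e / 2 * (norm (p0 - p1) / (norm (p0 - p1) + 1))"
      by (simp add: t_def field_simps)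
    also have "\<dots> < e"
    proof -
      have "norm (p0 - p1) + 1 > 0" by (simp add: add_nonneg_pos)
      then have "norm (p0 - p1) / (norm (p0 - p1) + 1) < 1" by (subst divide_less_eq_1_pos) auto
      then have "e / 2 * (norm (p0 - p1) / (norm (p0 - p1) + 1)) \<le> e / 2 * 1"
        using e by (intro mult_left_mono) auto
      then show ?thesis using e by linarith
    qed
    finally show ?thesis .
  qed
  ultimately have "q \<in> ?S" using sub by auto
  then have qnn: "snd q $ Some i $ Some j \<ge> 0" by (cases q) (simp add: Atilde_iff)
  have p0nn: "snd p0 $ Some i $ Some j \<ge> 0" using p0S by (cases p0) (simp add: Atilde_iff)
  have "snd q $ Some i $ Some j = (1 + t) * snd p0 $ Some i $ Some j - t * b $ j"
    by (simp add: q_def p1b)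
  show ?thesis
  proof (rule ccontr)
    assume "\<not> ?thesis"
    then have "snd p0 $ Some i $ Some j = 0" using p0nn by simp
    then have "snd q $ Some i $ Some j = - (t * b $ j)" using \<open>snd q $ Some i $ Some j = _\<close> by simp
    moreover have "t * b $ j > 0" using tp bpos by simp
    ultimately show False using qnn by simp
  qed
qed

lemma norm_mat_le:
  fixes A :: "real ^ 'n::finite ^ 'm::finite"
  shows "norm A \<le> (\<Sum>r\<in>UNIV. \<Sum>c\<in>UNIV. \<bar>A $ r $ c\<bar>)"
proof -
  have "norm A \<le> (\<Sum>r\<in>UNIV. norm (A $ r))"
    unfolding norm_vec_def by (rule L2_set_le_sum) simp
  also have "\<dots> \<le> (\<Sum>r\<in>UNIV. \<Sum>c\<in>UNIV. \<bar>A $ r $ c\<bar>)"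
    by (intro sum_mono norm_le_l1_cart)
  finally show ?thesis .
qed

lemma Atilde_compact:
  fixes a :: "real ^ 'm::finite" and b :: "real ^ 'n::finite" and Omega :: "real ^ 'n ^ 'm"
  shows "compact (Atilde a b Omega)"
proof (subst compact_eq_bounded_closed, intro conjI)
  have eq: "Atilde a b Omega = {p.
     (\<forall>i j. fst p $ i $ j \<ge> 0 \<and> snd p $ i $ j \<ge> 0) \<and>
     (\<forall>i. a $ i = (\<Sum>j\<in>UNIV. fst p $ Some i $ j)) \<and>
     (\<forall>j. fst p $ None $ j = 0) \<and>
     (\<forall>j. b $ j = (\<Sum>i\<in>UNIV. snd p $ i $ Some j)) \<and>
     (\<forall>i. snd p $ i $ None = 0) \<and>
     (\<forall>i j. Omega $ i $ j \<le> 0 \<longrightarrow> fst p $ Some i $ Some j = 0 \<and> snd p $ Some i $ Some j = 0) \<and>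
     (\<forall>j. (\<exists>i. Omega $ i $ j > 0) \<longrightarrow> snd p $ None $ Some j = 0) \<and>
     (\<forall>i. (\<exists>j. Omega $ i $ j > 0) \<longrightarrow> fst p $ Some i $ None = 0)}"
    by (rule set_eqI, case_tac x, simp add: Atilde_iff)
  show "closed (Atilde a b Omega)"
    unfolding eq
    by (intro closed_Collect_conj closed_Collect_all closed_Collect_imp closed_Collect_le closed_Collect_eq
        open_Collect_const continuous_intros)
  show "bounded (Atilde a b Omega)"
    unfolding bounded_iff
  proof (intro exI ballI)
    fix p assume "p \<in> Atilde a b Omega"
    then obtain A B where p: "p = (A,B)" and AB: "(A,B) \<in> Atilde a b Omega" by (cases p) auto
    have C: "(\<forall>i j. A $ i $ j \<ge> 0 \<and> B $ i $ j \<ge> 0) \<and>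
     (\<forall>i. a $ i = (\<Sum>j\<in>UNIV. A $ Some i $ j)) \<and>
     (\<forall>j. A $ None $ j = 0) \<and>
     (\<forall>j. b $ j = (\<Sum>i\<in>UNIV. B $ i $ Some j)) \<and>
     (\<forall>i. B $ i $ None = 0)"
      using AB by (simp add: Atilde_iff)
    have "norm A \<le> (\<Sum>r\<in>UNIV. \<Sum>c\<in>UNIV. \<bar>A $ r $ c\<bar>)" by (rule norm_mat_le)
    also have "\<dots> = (\<Sum>r\<in>UNIV. \<Sum>c\<in>UNIV. A $ r $ c)" using C by simp
    also have "\<dots> = (\<Sum>c\<in>UNIV. A $ None $ c) + (\<Sum>i\<in>UNIV. \<Sum>c\<in>UNIV. A $ Some i $ c)"
      by (rule sum_UNIV_option)
    also have "\<dots> = (\<Sum>i\<in>UNIV. a $ i)" using C by simp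
    finally have nA: "norm A \<le> (\<Sum>i\<in>UNIV. a $ i)" .
    have "norm B \<le> (\<Sum>r\<in>UNIV. \<Sum>c\<in>UNIV. \<bar>B $ r $ c\<bar>)" by (rule norm_mat_le)
    also have "\<dots> = (\<Sum>r\<in>UNIV. \<Sum>c\<in>UNIV. B $ r $ c)" using C by simp
    also have "\<dots> = (\<Sum>c\<in>UNIV. \<Sum>r\<in>UNIV. B $ r $ c)" by (rule sum.swap)
    also have "\<dots> = (\<Sum>r\<in>UNIV. B $ r $ None) + (\<Sum>j\<in>UNIV. \<Sum>r\<in>UNIV. B $ r $ Some j)"
      by (rule sum_UNIV_option)
    also have "\<dots> = (\<Sum>j\<in>UNIV. b $ j)" using C by simp
    finally have nB: "norm B \<le> (\<Sum>j\<in>UNIV. b $ j)" .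
    show "norm p \<le> (\<Sum>i\<in>UNIV. a $ i) + (\<Sum>j\<in>UNIV. b $ j)"
      unfolding p using norm_Pair_le[of A B] nA nB by linarith
  qed
qed

lemma Fobj_cont: "continuous_on S (Fobj Omega)"
proof -
  have "Fobj Omega = (\<lambda>p. \<Sum>i\<in>UNIV. \<Sum>j\<in>UNIV. sqrt (fst p $ Some i $ Some j * snd p $ Some i $ Some j) * Omega $ i $ j)"
    by (rule ext) (simp add: Fobj_def split: prod.split)
  then show ?thesis by (simp only:) (intro continuous_intros)
qed

theorem theorem2p15:
  fixes a :: "real ^ 'm::finite" and b :: "real ^ 'n::finite"
    and Omega :: "real ^ 'n ^ 'm"
    and p0 :: "('m,'n) mat0 \<times> ('m,'n) mat0"
  assumes apos: "\<forall>i. a $ i > 0"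
    and bpos: "\<forall>j. b $ j > 0"
    and p0_int: "p0 \<in> rel_interior (Atilde a b Omega)"
  shows "\<exists>q\<in>Atilde a b Omega. (\<forall>p\<in>Atilde a b Omega. Fobj Omega p \<le> Fobj Omega q) \<and>
           (\<lambda>k. Fobj Omega (((\<lambda>p. T2 b Omega (T1 a Omega p)) ^^ k) p0))
             \<longlonglongrightarrow> Fobj Omega q"
proof -
  let ?S = "Atilde a b Omega"
  have p0S: "p0 \<in> ?S" using p0_int rel_interior_subset by blast
  obtain q where qS: "q \<in> ?S" and qmax: "\<forall>p\<in>?S. Fobj Omega p \<le> Fobj Omega q"
    using continuous_attains_sup[OF Atilde_compact _ Fobj_cont] p0S by blast
  obtain Ao Bo where q: "q = (Ao, Bo)" by (cases q)
  define Fs where "Fs = Fobj Omega q"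
  define T where "T = (\<lambda>p. T2 b Omega (T1 a Omega p))"
  define p where "p k = (T ^^ k) p0" for k
  have pSuc: "p (Suc k) = T (p k)" for k by (simp add: p_def)
  have inv: "p k \<in> ?S \<and> (\<forall>i j. Omega $ i $ j > 0 \<longrightarrow> snd (p k) $ Some i $ Some j > 0)" for k
  proof (induction k)
    case 0
    then show ?case using p0S relint_pos[OF p0_int apos bpos] by (simp add: p_def)
  next
    case (Suc k)
    obtain A B where pk: "p k = (A, B)" by (cases "p k")
    have AB: "(A,B) \<in> ?S" and Bp: "\<forall>i j. Omega $ i $ j > 0 \<longrightarrow> B $ Some i $ Some j > 0"
      using Suc pk by auto
    define A' where "A' = fst (T1 a Omega (A,B))"
    have "T (A,B) = (A', snd (T2 b Omega (A',B)))"
      unfolding T_def A'_def by (subst T1_pair) (simp add: T2_pair[symmetric])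
    moreover have "(A',B) \<in> ?S" "\<forall>i j. Omega $ i $ j > 0 \<longrightarrow> A' $ Some i $ Some j > 0"
      using T1_step[OF AB apos Bp] by (simp_all add: A'_def)
    ultimately show ?case using T2_step[of A' B a b Omega] bpos pk pSuc by simp
  qed
  define P where "P i j = sqrt (Ao $ Some i $ Some j * Bo $ Some i $ Some j) * Omega $ i $ j" for i j
  have Co: "(\<forall>i j. Ao $ i $ j \<ge> 0 \<and> Bo $ i $ j \<ge> 0) \<and>
     (\<forall>i j. Omega $ i $ j \<le> 0 \<longrightarrow> Ao $ Some i $ Some j = 0 \<and> Bo $ Some i $ Some j = 0)"
    using qS q by (simp add: Atilde_iff)
  have Pnn: "P i j \<ge> 0" for i j
    using Co by (cases "Omega $ i $ j \<le> 0") (auto simp: P_def)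
  define U where "U k = - (\<Sum>i\<in>UNIV. \<Sum>j\<in>UNIV. P i j * ln (snd (p k) $ Some i $ Some j))" for k
  define L where "L = - (\<Sum>i\<in>UNIV. \<Sum>j\<in>UNIV. P i j * ln (b $ j))"
  have Ulow: "U k \<ge> L" for k
  proof -
    have "P i j * ln (snd (p k) $ Some i $ Some j) \<le> P i j * ln (b $ j)" for i j
    proof (cases "P i j > 0")
      case False
      then show ?thesis using Pnn[of i j] by simp
    next
      case True
      have om: "Omega $ i $ j > 0"
      proof (rule ccontr)
        assume "\<not> Omega $ i $ j > 0"
        then have "Ao $ Some i $ Some j = 0" using Co by auto
        then have "P i j = 0" by (simp add: P_def)
        then show False using True by simp
      qed
      obtain A B where pk: "p k = (A, B)" by (cases "p k")
      have AB: "(A,B) \<in> ?S" and Bp: "B $ Some i $ Some j > 0" using inv[of k] om pk by auto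
      have C: "(\<forall>r c. B $ r $ c \<ge> 0) \<and> b $ j = (\<Sum>r\<in>UNIV. B $ r $ Some j)"
        using AB by (simp add: Atilde_iff)
      have "B $ Some i $ Some j \<le> b $ j"
        using C member_le_sum[of "Some i" UNIV "\<lambda>r. B $ r $ Some j"] by simp
      then have "ln (B $ Some i $ Some j) \<le> ln (b $ j)" using Bp by simp
      then show ?thesis using True pk by (simp add: mult_left_mono)
    qed
    then show ?thesis unfolding U_def L_def by (simp add: sum_mono)
  qed
  have Ustep: "U (Suc k) - U k \<le> 2 * (Fobj Omega (p (Suc k)) - Fs)" for k
  proof -
    obtain A B where pk: "p k = (A, B)" by (cases "p k")
    have AB: "(A,B) \<in> ?S" and Bp: "\<forall>i j. Omega $ i $ j > 0 \<longrightarrow> B $ Some i $ Some j > 0"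
      using inv[of k] pk by auto
    define A' where "A' = fst (T1 a Omega (A,B))"
    define B'' where "B'' = snd (T2 b Omega (A',B))"
    have pS: "p (Suc k) = (A', B'')"
      unfolding pSuc pk T_def A'_def B''_def by (subst T1_pair) (simp add: T2_pair[symmetric])
    have A'S: "(A',B) \<in> ?S" using T1_step[OF AB apos Bp] by (simp add: A'_def)
    have ps: "(\<Sum>i\<in>UNIV. \<Sum>j\<in>UNIV. P i j * (ln (B $ Some i $ Some j) - ln (B'' $ Some i $ Some j)))
         \<le> 2 * Fobj Omega (A', B) + 2 * Fobj Omega (A', B'') - 4 * Fobj Omega (Ao,Bo)"
      using potential_step[OF AB Bp qS[unfolded q] apos bpos] unfolding P_def A'_def B''_def .
    have "U (Suc k) - U k = (\<Sum>i\<in>UNIV. \<Sum>j\<in>UNIV. P i j * (ln (B $ Some i $ Some j) - ln (B'' $ Some i $ Some j)))"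
      unfolding U_def pS pk by (simp add: right_diff_distrib sum_subtractf)
    also have "\<dots> \<le> 2 * Fobj Omega (A', B) + 2 * Fobj Omega (A', B'') - 4 * Fs"
      using ps by (simp add: Fs_def q)
    also have "Fobj Omega (A', B) \<le> Fs" using qmax A'S by (simp add: Fs_def)
    then have "2 * Fobj Omega (A', B) + 2 * Fobj Omega (A', B'') - 4 * Fs \<le> 2 * (Fobj Omega (p (Suc k)) - Fs)"
      by (simp add: pS)
    finally show ?thesis .
  qed
  define e where "e k = Fs - Fobj Omega (p (Suc k))" for k
  have enn: "e k \<ge> 0" for k using qmax inv[of "Suc k"] by (simp add: e_def Fs_def)
  have tele: "(\<Sum>k<N. e k) \<le> (U 0 - U N) / 2" for N
  proof (induction N)
    case 0 then show ?case by simp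
  next
    case (Suc N)
    have "e N \<le> (U N - U (Suc N)) / 2" using Ustep[of N] by (simp add: e_def)
    then show ?case using Suc by simp
  qed
  have "summable e"
  proof (rule summableI_nonneg_bounded)
    show "0 \<le> e k" for k by (rule enn)
    show "(\<Sum>k<N. e k) \<le> (U 0 - L) / 2" for N using tele[of N] Ulow[of N] by simp
  qed
  then have "e \<longlonglongrightarrow> 0" by (rule summable_LIMSEQ_zero)
  then have "(\<lambda>k. Fs - e k) \<longlonglongrightarrow> Fs - 0" by (intro tendsto_diff tendsto_const)
  then have "(\<lambda>k. Fobj Omega (p (Suc k))) \<longlonglongrightarrow> Fs" by (simp add: e_def)
  then have "(\<lambda>k. Fobj Omega (p k)) \<longlonglongrightarrow> Fs" by (rule LIMSEQ_imp_Suc)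
  then show ?thesis using qS qmax unfolding p_def T_def Fs_def by blast
qed

end
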